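(* Let $c>0$ be a constant, let $\alpha\in[1,2)$, and let $K$ be an origin-symmetric convex body in $\mathbb{R}^n$ such that $$\max\{N(K,tB_2^n),\,N(B_2^n,tK)\}\ \le\ \exp\Big(\frac{cn}{t^\alpha(2-\alpha)}\Big)\qquad\text{for every } t\ge1.$$ Then for every $t\ge1$, $$|K+tB_2^n|^{1/n}\ \le\ 2e^c\,t\,|K|^{1/n}\,\frac{1}{2-\alpha}\,\exp\Big(\frac{c}{t^\alpha(2-\alpha)}\Big).$$
   Context: $B_2^n$ is the Euclidean unit ball, $|\cdot|$ is volume, and $K+tB_2^n$ is the Minkowski sum. For symmetric convex bodies $A,B$, the covering number $N(A,B)$ is the minimal number of translates of $B$, with centers in $A$, needed to cover $A$. (By a theorem of Pisier, for every $\alpha\in(0,2)$ every origin-symmetric convex body has a linear image satisfying the hypothesis with an absolute constant $c$.) *)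

theory Defs
  imports "HOL-Analysis.Analysis"
begin

definition convex_body :: "'a::euclidean_space set \<Rightarrow> bool" where
  "convex_body K \<longleftrightarrow> compact K \<and> convex K \<and> interior K \<noteq> {}"

definition origin_symmetric :: "'a::real_vector set \<Rightarrow> bool" where
  "origin_symmetric K \<longleftrightarrow> (\<forall>x\<in>K. - x \<in> K)"

definition minkowski_sum :: "'a::real_vector set \<Rightarrow> 'a set \<Rightarrow> 'a set" where
  "minkowski_sum A B = {a + b | a b. a \<in> A \<and> b \<in> B}"

definition dilate :: "real \<Rightarrow> 'a::real_vector set \<Rightarrow> 'a set" where
  "dilate t B = (\<lambda>x. t *\<^sub>R x) ` B"

definition covering_number :: "'a::real_vector set \<Rightarrow> 'a set \<Rightarrow> nat" where
  "covering_number A B =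
     (LEAST m. \<exists>C. finite C \<and> C \<subseteq> A \<and> card C = m \<and> A \<subseteq> (\<Union>x\<in>C. (\<lambda>y. x + y) ` B))"

end

theory Submission
  imports Defs
begin

lemma cover_exists:
  assumes "\<exists>C. finite C \<and> C \<subseteq> A \<and> A \<subseteq> (\<Union>x\<in>C. (\<lambda>y. x + y) ` B)"
  shows "\<exists>C. finite C \<and> C \<subseteq> A \<and> card C = covering_number A B \<and> A \<subseteq> (\<Union>x\<in>C. (\<lambda>y. x + y) ` B)"
proof -
  from assms obtain C0 where "finite C0 \<and> C0 \<subseteq> A \<and> A \<subseteq> (\<Union>x\<in>C0. (\<lambda>y. x + y) ` B)" by blast
  then have "\<exists>m. \<exists>C. finite C \<and> C \<subseteq> A \<and> card C = m \<and> A \<subseteq> (\<Union>x\<in>C. (\<lambda>y. x + y) ` B)"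
    by (intro exI[of _ "card C0"] exI[of _ C0]) simp
  then show ?thesis unfolding covering_number_def by (rule LeastI_ex)
qed

lemma ball_cover:
  fixes S :: "'a::euclidean_space set"
  assumes "compact S" "e > 0" "ball 0 e \<subseteq> B"
  shows "\<exists>C. finite C \<and> C \<subseteq> S \<and> S \<subseteq> (\<Union>x\<in>C. (\<lambda>y. x + y) ` B)"
proof -
  obtain k where k: "finite k" "k \<subseteq> S" "S \<subseteq> (\<Union>x\<in>k. ball x e)"
    using seq_compact_imp_totally_bounded[OF compact_imp_seq_compact[OF assms(1)], rule_format, OF assms(2)]
    by (elim exE conjE) (rule that)
  have "ball x e \<subseteq> (\<lambda>y. x + y) ` B" for x
  proof
    fix z assume "z \<in> ball x e"
    then have "norm (x - z) < e" by (simp add: dist_norm)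
    then have "norm (z - x) < e" by (simp only: norm_minus_commute)
    then have "z - x \<in> ball 0 e" by simp
    then have "z - x \<in> B" using assms(3) by blast
    then show "z \<in> (\<lambda>y. x + y) ` B" by (rule rev_image_eqI) simp
  qed
  then have "(\<Union>x\<in>k. ball x e) \<subseteq> (\<Union>x\<in>k. (\<lambda>y. x + y) ` B)"
    by (rule UN_mono[OF order_refl])
  then have "S \<subseteq> (\<Union>x\<in>k. (\<lambda>y. x + y) ` B)" using k(3) by (rule order_trans[rotated])
  then show ?thesis using k(1,2) by (intro exI[of _ k]) simp
qed

lemma measure_trans_dilate:
  fixes B :: "'a::euclidean_space set"
  assumes "s \<ge> 0"
  shows "measure lebesgue ((\<lambda>y. x + y) ` dilate s B) = s ^ DIM('a) * measure lebesgue B"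
proof -
  have "(\<lambda>y. x + y) ` dilate s B = (\<lambda>z. s *\<^sub>R z + x) ` B"
    unfolding dilate_def image_image by (simp add: add.commute)
  then show ?thesis using measure_lebesgue_affine[of s x B] assms by simp
qed

lemma compact_trans_dilate:
  fixes B :: "'a::euclidean_space set"
  assumes "compact B"
  shows "compact ((\<lambda>y. x + y) ` dilate s B)"
  unfolding dilate_def using compact_translation[OF compact_scaling[OF assms]]
  by simp

lemma measure_cover_bound:
  fixes B :: "'a::euclidean_space set"
  assumes C: "finite C" and sub: "S \<subseteq> (\<Union>x\<in>C. (\<lambda>y. x + y) ` dilate s B)"
    and S: "S \<in> sets lebesgue" and B: "compact B" and s: "s \<ge> 0"
  shows "measure lebesgue S \<le> real (card C) * s ^ DIM('a) * measure lebesgue B"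
proof -
  have cT: "compact ((\<lambda>y. x + y) ` dilate s B)" for x
    by (rule compact_trans_dilate[OF B])
  have cU: "compact (\<Union>x\<in>C. (\<lambda>y. x + y) ` dilate s B)"
    by (rule compact_UN[OF C cT])
  have "measure lebesgue S \<le> measure lebesgue (\<Union>x\<in>C. (\<lambda>y. x + y) ` dilate s B)"
    by (rule measure_mono_fmeasurable[OF sub S lmeasurable_compact[OF cU]])
  also have "\<dots> \<le> (\<Sum>x\<in>C. measure lebesgue ((\<lambda>y. x + y) ` dilate s B))"
    by (rule measure_UNION_le[OF C fmeasurableD[OF lmeasurable_compact[OF cT]]])
  also have "\<dots> = (\<Sum>x\<in>C. s ^ DIM('a) * measure lebesgue B)"
    by (rule sum.cong[OF refl measure_trans_dilate[OF s]])
  also have "\<dots> = real (card C) * s ^ DIM('a) * measure lebesgue B" by simp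
  finally show ?thesis .
qed

theorem corollary2:
  fixes K :: "'a::euclidean_space set" and c \<alpha> :: real
  assumes "c > 0" and "1 \<le> \<alpha>" and "\<alpha> < 2"
    and "convex_body K" and "origin_symmetric K"
    and "\<forall>t\<ge>1. max (real (covering_number K (dilate t (cball 0 1))))
                     (real (covering_number (cball 0 1) (dilate t K)))
               \<le> exp (c * real DIM('a) / (t powr \<alpha> * (2 - \<alpha>)))"
  shows "\<forall>t\<ge>1. measure lebesgue (minkowski_sum K (dilate t (cball 0 1))) powr (1 / real DIM('a))
           \<le> 2 * exp c * t * measure lebesgue K powr (1 / real DIM('a)) * (1 / (2 - \<alpha>))
               * exp (c / (t powr \<alpha> * (2 - \<alpha>)))"
proof (intro allI impI)
  fix t :: real assume t: "t \<ge> 1"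
  define n where "n = DIM('a)"
  define s where "s = 2 - \<alpha>"
  define r where "r = 1 / s"
  define B :: "'a set" where "B = cball 0 1"
  have s: "s > 0" "s \<le> 1" using assms(2,3) s_def by auto
  have r1: "r \<ge> 1" using s r_def by simp
  have n: "n > 0" unfolding n_def by simp
  have cK: "compact K" "convex K" "interior K \<noteq> {}" using assms(4) convex_body_def by auto
  obtain x where x: "x \<in> interior K" using cK by blast
  have "interior K = uminus ` interior K"
  proof -
    have sym: "uminus ` K = K" using assms(5) unfolding origin_symmetric_def
      by (auto intro: rev_image_eqI[of "- _"]) 
    have "interior (uminus ` K) = uminus ` interior K"
      by (rule interior_injective_linear_image) (auto simp: linear_uminus)
    with sym show ?thesis by simp
  qed
  then have "- x \<in> interior K" using x by (metis image_eqI minus_minus)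
  have "(1/2) *\<^sub>R x + (1/2) *\<^sub>R (-x) \<in> interior K"
    by (rule convexD[OF convex_interior[OF cK(2)] x \<open>- x \<in> interior K\<close>]) auto
  then have "0 \<in> interior K" by simp
  then obtain e where e: "e > 0" "ball 0 e \<subseteq> K" unfolding mem_interior by blast
  have "ball 0 t \<subseteq> dilate t B"
  proof
    fix z :: 'a assume "z \<in> ball 0 t"
    then have "(1/t) *\<^sub>R z \<in> B" using t by (simp add: B_def norm_divide)
    moreover have "z = t *\<^sub>R ((1/t) *\<^sub>R z)" using t by simp
    ultimately show "z \<in> dilate t B" unfolding dilate_def by blast
  qed
  then have "\<exists>C. finite C \<and> C \<subseteq> K \<and> card C = covering_number K (dilate t B) \<and>
      K \<subseteq> (\<Union>x\<in>C. (\<lambda>y. x + y) ` dilate t B)"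
    using t by (intro cover_exists ball_cover[OF cK(1), of t]) auto
  then obtain C where C: "finite C" "C \<subseteq> K" "card C = covering_number K (dilate t B)"
      "K \<subseteq> (\<Union>x\<in>C. (\<lambda>y. x + y) ` dilate t B)" by blast
  have "ball 0 (r*e) \<subseteq> dilate r K"
  proof
    fix z :: 'a assume "z \<in> ball 0 (r*e)"
    then have "(1/r) *\<^sub>R z \<in> ball 0 e" using r1 e by (simp add: norm_divide divide_simps mult.commute)
    then have "(1/r) *\<^sub>R z \<in> K" using e by blast
    moreover have "z = r *\<^sub>R ((1/r) *\<^sub>R z)" using r1 by simp
    ultimately show "z \<in> dilate r K" unfolding dilate_def by blast
  qed
  then have "\<exists>D. finite D \<and> D \<subseteq> B \<and> card D = covering_number B (dilate r K) \<and>
      B \<subseteq> (\<Union>x\<in>D. (\<lambda>y. x + y) ` dilate r K)"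
    using r1 e by (intro cover_exists ball_cover[of B "r*e"]) (auto simp: B_def)
  then obtain D where D: "finite D" "D \<subseteq> B" "card D = covering_number B (dilate r K)"
      "B \<subseteq> (\<Union>x\<in>D. (\<lambda>y. x + y) ` dilate r K)" by blast
  have N1: "real (card C) \<le> exp (c * n / (t powr \<alpha> * s))"
    using assms(6)[rule_format, OF t] C(3) unfolding B_def n_def s_def by (simp add: max_def split: if_splits)
  have "real (card D) \<le> exp (c * n / (r powr \<alpha> * s))"
    using assms(6)[rule_format, OF r1] D(3) unfolding B_def n_def s_def by (simp add: max_def split: if_splits)
  also have "\<dots> \<le> exp (c * n)"
  proof -
    have "r powr \<alpha> \<ge> r powr 1" using r1 assms(2) by (intro powr_mono) auto
    then have "r powr \<alpha> * s \<ge> r * s" using r1 s by (intro mult_right_mono) auto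
    moreover have "r * s = 1" using s r_def by simp
    ultimately have "r powr \<alpha> * s \<ge> 1" by simp
    then have "c * n / (r powr \<alpha> * s) \<le> c * n"
      using divide_left_mono[of 1 "r powr \<alpha> * s" "c*n"] assms(1) n by simp
    then show ?thesis by simp
  qed
  finally have N2: "real (card D) \<le> exp (c * n)" .
  have cB: "compact B" unfolding B_def by simp
  have mB: "measure lebesgue B \<le> real (card D) * r ^ n * measure lebesgue K"
    unfolding n_def
    by (rule measure_cover_bound[OF D(1) D(4) fmeasurableD[OF lmeasurable_compact[OF cB]] cK(1)]) (use r1 in simp)
  have sub: "minkowski_sum K (dilate t B) \<subseteq> (\<Union>x\<in>C. (\<lambda>y. x + y) ` dilate (2*t) B)"
  proof
    fix z assume "z \<in> minkowski_sum K (dilate t B)"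
    then obtain k b where kb: "z = k + t *\<^sub>R b" "k \<in> K" "b \<in> B"
      unfolding minkowski_sum_def dilate_def by blast
    from kb(2) C(4) obtain x where x: "x \<in> C" "k \<in> (\<lambda>y. x + y) ` dilate t B" by blast
    then obtain b' where xb: "x \<in> C" "b' \<in> B" "k = x + t *\<^sub>R b'"
      unfolding dilate_def by auto
    have "norm ((1/2) *\<^sub>R (b + b')) \<le> 1"
    proof -
      have "norm (b + b') \<le> 2" using kb(3) xb(2) norm_triangle_ineq[of b b'] by (simp add: B_def)
      then show ?thesis by simp
    qed
    then have w: "(1/2) *\<^sub>R (b + b') \<in> B" by (simp add: B_def)
    have zeq: "z = x + (2*t) *\<^sub>R ((1/2) *\<^sub>R (b + b'))"
      using kb xb by (simp add: algebra_simps)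
    have "(2*t) *\<^sub>R ((1/2) *\<^sub>R (b + b')) \<in> dilate (2*t) B"
      unfolding dilate_def using w by (rule imageI)
    then have "x + (2*t) *\<^sub>R ((1/2) *\<^sub>R (b + b')) \<in> (\<lambda>y. x + y) ` dilate (2*t) B"
      by (rule imageI)
    then have "z \<in> (\<lambda>y. x + y) ` dilate (2*t) B"
      using zeq by (simp only:)
    then show "z \<in> (\<Union>x\<in>C. (\<lambda>y. x + y) ` dilate (2*t) B)"
      using xb(1) by blast
  qed
  have cS: "compact (minkowski_sum K (dilate t B))"
    unfolding minkowski_sum_def dilate_def by (intro compact_sums cK(1) compact_scaling cB)
  have mS: "measure lebesgue (minkowski_sum K (dilate t B)) \<le> real (card C) * (2*t) ^ n * measure lebesgue B"
    unfolding n_def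
    by (rule measure_cover_bound[OF C(1) sub fmeasurableD[OF lmeasurable_compact[OF cS]] cB]) (use t in simp)
  define M where "M = measure lebesgue K"
  have M0: "M \<ge> 0" unfolding M_def by simp
  define R where "R = 2 * exp c * t * M powr (1 / real n) * r * exp (c / (t powr \<alpha> * s))"
  have R0: "R \<ge> 0" unfolding R_def using t r1 by simp
  have "measure lebesgue (minkowski_sum K (dilate t B))
       \<le> exp (c * n / (t powr \<alpha> * s)) * (2*t) ^ n * (exp (c * n) * r ^ n * M)"
  proof -
    have "real (card C) * (2*t) ^ n * measure lebesgue B \<le>
          exp (c * n / (t powr \<alpha> * s)) * (2*t) ^ n * (real (card D) * r ^ n * M)"
      using N1 mB t by (intro mult_mono) (auto simp: M_def)
    also have "\<dots> \<le> exp (c * n / (t powr \<alpha> * s)) * (2*t) ^ n * (exp (c * n) * r ^ n * M)"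
      using N2 t r1 M0 by (intro mult_left_mono mult_right_mono) auto
    finally show ?thesis using mS by linarith
  qed
  also have "\<dots> = R ^ n"
  proof -
    have e1: "exp (c * n / (t powr \<alpha> * s)) = exp (c / (t powr \<alpha> * s)) ^ n"
      by (simp add: exp_of_nat_mult[symmetric] mult.commute)
    have e2: "exp (c * n) = exp c ^ n" by (simp add: exp_of_nat_mult[symmetric] mult.commute)
    have e3: "(M powr (1 / real n)) ^ n = M"
    proof (cases "M = 0")
      case True then show ?thesis using n by simp
    next
      case False
      then have Mp: "M > 0" using M0 by simp
      then have "(M powr (1 / real n)) ^ n = (M powr (1 / real n)) powr real n"
        by (simp add: powr_realpow)
      also have "\<dots> = M" using n Mp by (simp add: powr_powr)
      finally show ?thesis .
    qed
    show ?thesis unfolding R_def e1 e2 power_mult_distrib e3 by simp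
  qed
  finally have "measure lebesgue (minkowski_sum K (dilate t B)) powr (1 / real n) \<le> (R ^ n) powr (1 / real n)"
    by (intro powr_mono2) auto
  also have "(R ^ n) powr (1 / real n) = R"
  proof (cases "R = 0")
    case True then show ?thesis using n by simp
  next
    case False
    then have Rp: "R > 0" using R0 by simp
    then have "(R ^ n) powr (1 / real n) = (R powr real n) powr (1 / real n)"
      by (simp add: powr_realpow)
    also have "\<dots> = R" using n Rp by (simp add: powr_powr)
    finally show ?thesis .
  qed
  finally have fin: "measure lebesgue (minkowski_sum K (dilate t B)) powr (1 / real n) \<le> R" .
  have "measure lebesgue (minkowski_sum K (dilate t (cball 0 1))) powr (1 / real DIM('a)) \<le> R"
    using fin by (simp only: B_def n_def)
  then show "measure lebesgue (minkowski_sum K (dilate t (cball 0 1))) powr (1 / real DIM('a))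
           \<le> 2 * exp c * t * measure lebesgue K powr (1 / real DIM('a)) * (1 / (2 - \<alpha>))
               * exp (c / (t powr \<alpha> * (2 - \<alpha>)))"
    by (simp only: R_def M_def r_def s_def n_def)
qed

end
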